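(* Let $q$ be a prime power and let $d,\tau,n,m$ be integers with $\lfloor (d-1)/2\rfloor+1\le\tau<d\le n\le m$ and $\tau\le n-\tau$. Then there exist a code $\mathcal C\subseteq\mathbb F_{q^m}^n$ with minimum rank distance at least $d$ and a word $\mathbf r\in\mathbb F_{q^m}^n$ such that $$\max_{\mathbf y\in\mathbb F_{q^m}^n}|\mathcal C\cap\mathcal B_\tau(\mathbf y)|\ \ge\ |\mathcal C\cap\mathcal B_\tau(\mathbf r)|\ \ge\ q^{(n-\tau)(\tau-\lfloor (d-1)/2\rfloor)}.$$
   Context: Fixing a basis of $\mathbb F_{q^m}$ over $\mathbb F_q$, each vector in $\mathbb F_{q^m}^n$ is identified with an $m\times n$ matrix over $\mathbb F_q$; $\mathrm{rk}$ denotes the rank of this matrix. The minimum rank distance of $\mathcal C$ is $\min\{\mathrm{rk}(\mathbf c_1-\mathbf c_2):\mathbf c_1\neq\mathbf c_2\in\mathcal C\}$, and $\mathcal B_\tau(\mathbf r)=\{\mathbf x:\mathrm{rk}(\mathbf x-\mathbf r)\le\tau\}$. Codes are not required to be linear. *)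

theory Defs
  imports "HOL-Analysis.Analysis"
begin

text \<open>Vectors of F_{q^m}^n are represented (via a fixed F_q-basis of F_{q^m})
  as m x n matrices over F_q, i.e. elements of 'a^'n^'m where 'a is F_q,
  CARD('n) = n and CARD('m) = m.\<close>

definition min_rank_dist_ge :: "('a::field^'n^'m) set \<Rightarrow> nat \<Rightarrow> bool" where
  "min_rank_dist_ge C d \<longleftrightarrow> (\<forall>c1\<in>C. \<forall>c2\<in>C. c1 \<noteq> c2 \<longrightarrow> d \<le> rank (c1 - c2))"

definition rank_ball :: "nat \<Rightarrow> 'a::field^'n^'m \<Rightarrow> ('a^'n^'m) set" where
  "rank_ball \<tau> r = {x. rank (x - r) \<le> \<tau>}"

end

theory Submission
  imports Defs "HOL-Algebra.Algebraic_Closure_Type"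
begin


definition Lam :: "'b::zero set \<Rightarrow> nat \<Rightarrow> (nat \<Rightarrow> 'b) set" where
  "Lam S k = {l. (\<forall>i<k. l i \<in> S) \<and> (\<forall>i\<ge>k. l i = 0)}"

lemma Lam_Suc: "Lam S (Suc k) = (\<lambda>(a,l). l(k:=a)) ` (S \<times> Lam S k)"
proof -
  have "l \<in> (\<lambda>(a,l). l(k:=a)) ` (S \<times> Lam S k)" if l: "l \<in> Lam S (Suc k)" for l
  proof -
    have "l = (\<lambda>(a,l). l(k:=a)) (l k, l(k:=0))" by auto
    moreover have "(l k, l(k:=0)) \<in> S \<times> Lam S k" using l by (auto simp: Lam_def)
    ultimately show ?thesis by blast
  qed
  moreover have "l \<in> Lam S (Suc k)" if "l \<in> (\<lambda>(a,l). l(k:=a)) ` (S \<times> Lam S k)" for l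
    using that by (auto simp: Lam_def less_Suc_eq)
  ultimately show ?thesis by blast
qed

lemma card_Lam:
  assumes "finite S"
  shows "finite (Lam S k) \<and> card (Lam S k) = card S ^ k"
proof (induction k)
  case 0
  have "Lam S 0 = {\<lambda>_. 0}" by (auto simp: Lam_def)
  then show ?case by simp
next
  case (Suc k)
  have inj: "inj_on (\<lambda>(a,l). l(k:=a)) (S \<times> Lam S k)"
  proof (rule inj_onI, clarify)
    fix a l a' l' assume "a \<in> S" "l \<in> Lam S k" "a' \<in> S" "l' \<in> Lam S k" "l(k := a) = l'(k := a')"
    then show "a = a' \<and> l = l'"
      by (auto simp: Lam_def fun_eq_iff) (metis fun_upd_same, metis fun_upd_other order_refl)
  qed
  show ?case using Suc assms inj by (simp add: Lam_Suc card_image card_cartesian_product)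
qed

lemma sum_closed:
  assumes "0 \<in> V" "\<And>x y. x\<in>V \<Longrightarrow> y\<in>V \<Longrightarrow> x+y\<in>V" "finite A" "\<And>i. i\<in>A \<Longrightarrow> f i \<in> V"
  shows "sum f A \<in> V"
  using assms(3,4) by (induction A rule: finite_induct) (auto intro: assms(1,2))

lemma basis_exists_G:
  fixes S V :: "'b::field set"
  assumes S: "finite S" "0 \<in> S" "1 \<in> S" "\<And>a b. a\<in>S \<Longrightarrow> b\<in>S \<Longrightarrow> a+b \<in> S"
    "\<And>a b. a\<in>S \<Longrightarrow> b\<in>S \<Longrightarrow> a*b\<in>S" "\<And>a. a\<in>S \<Longrightarrow> -a \<in>S" "\<And>a. a\<in>S \<Longrightarrow> inverse a \<in> S"
  and V: "finite V" "0 \<in> V" "\<And>x y. x\<in>V \<Longrightarrow> y\<in>V \<Longrightarrow> x+y\<in>V" "\<And>a x. a\<in>S \<Longrightarrow> x\<in>V \<Longrightarrow> a*x \<in> V"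
  shows "\<exists>k b. (\<forall>i<k. b i \<in> V) \<and> bij_betw (\<lambda>l. \<Sum>i<k. l i * b i) (Lam S k) V"
proof -
  have Ssub: "a - b \<in> S" if "a \<in> S" "b \<in> S" for a b
    using S(4)[OF that(1) S(6)[OF that(2)]] by simp
  define P where "P j \<longleftrightarrow> (\<exists>b. (\<forall>i<j. b i \<in> V) \<and> inj_on (\<lambda>l. \<Sum>i<j. l i * b i) (Lam S j))" for j
  have img: "(\<lambda>l. \<Sum>i<j. l i * b i) ` Lam S j \<subseteq> V" if "\<forall>i<j. b i \<in> V" for j b
  proof
    fix x assume "x \<in> (\<lambda>l. \<Sum>i<j. l i * b i) ` Lam S j"
    then obtain l where l: "l \<in> Lam S j" "x = (\<Sum>i<j. l i * b i)" by blast
    show "x \<in> V" unfolding l(2)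
      by (rule sum_closed[OF V(2,3)]) (use l that V(4) in \<open>auto simp: Lam_def\<close>)
  qed
  have cardS: "2 \<le> card S"
  proof -
    have "{0,1} \<subseteq> S" using S by auto
    then have "card {0,1::'b} \<le> card S" using S(1) by (rule card_mono[rotated])
    then show ?thesis by simp
  qed
  have bound: "j < card V" if "P j" for j
  proof -
    obtain b where b: "\<forall>i<j. b i \<in> V" "inj_on (\<lambda>l. \<Sum>i<j. l i * b i) (Lam S j)"
      using \<open>P j\<close> P_def by blast
    have "card (Lam S j) \<le> card V"
      using card_inj_on_le[OF b(2) _ V(1)] img[OF b(1)] by blast
    then have "card S ^ j \<le> card V" using card_Lam[OF S(1)] by simp
    moreover have "2 ^ j \<le> card S ^ j" using cardS by (simp add: power_mono)
    moreover have "j < 2 ^ j" by simp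
    ultimately show ?thesis by linarith
  qed
  have "P 0" unfolding P_def
  proof (intro exI conjI)
    show "inj_on (\<lambda>l. \<Sum>i<0. l i * (\<lambda>_. 0) i) (Lam S 0)"
      by (rule inj_onI) (auto simp: Lam_def fun_eq_iff)
  qed auto
  obtain j where j: "P j" "\<And>y. P y \<Longrightarrow> y \<le> j"
    using Nat.ex_has_greatest_nat[of P 0 "card V"] \<open>P 0\<close> bound by (meson less_imp_le)
  obtain b where b: "\<forall>i<j. b i \<in> V" "inj_on (\<lambda>l. \<Sum>i<j. l i * b i) (Lam S j)"
    using \<open>P j\<close> P_def by blast
  have surj: "(\<lambda>l. \<Sum>i<j. l i * b i) ` Lam S j = V"
  proof (rule ccontr)
    assume "(\<lambda>l. \<Sum>i<j. l i * b i) ` Lam S j \<noteq> V"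
    then obtain v where v: "v \<in> V" "v \<notin> (\<lambda>l. \<Sum>i<j. l i * b i) ` Lam S j"
      using img[OF b(1)] by blast
    define b' where "b' = b(j := v)"
    have sum_eq: "(\<Sum>i<Suc j. l i * b' i) = (\<Sum>i<j. l i * b i) + l j * v" for l
      by (simp add: b'_def)
    have "P (Suc j)" unfolding P_def
    proof (intro exI conjI)
      show "\<forall>i<Suc j. b' i \<in> V" using b(1) v(1) by (auto simp: b'_def less_Suc_eq)
      show "inj_on (\<lambda>l. \<Sum>i<Suc j. l i * b' i) (Lam S (Suc j))"
      proof (rule inj_onI)
        fix l l' assume l: "l \<in> Lam S (Suc j)" and l': "l' \<in> Lam S (Suc j)"
          and eq: "(\<Sum>i<Suc j. l i * b' i) = (\<Sum>i<Suc j. l' i * b' i)"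
        have eq2: "(\<Sum>i<j. l i * b i) + l j * v = (\<Sum>i<j. l' i * b i) + l' j * v"
          using eq sum_eq by simp
        have ljeq: "l j = l' j"
        proof (rule ccontr)
          assume ne: "l j \<noteq> l' j"
          define d where "d = l j - l' j"
          have d0: "d \<noteq> 0" using ne by (simp add: d_def)
          have "l j \<in> S" "l' j \<in> S" using l l' by (auto simp: Lam_def)
          then have dS: "d \<in> S" using S(4,6) unfolding d_def diff_conv_add_uminus by blast
          define m where "m i = (if i < j then inverse d * (l' i - l i) else 0)" for i
          have mL: "m \<in> Lam S j"
            using l l' S(5,7) dS Ssub by (auto simp: Lam_def m_def)
          have "d * v = (\<Sum>i<j. l' i * b i) - (\<Sum>i<j. l i * b i)"
            using eq2 by (simp add: d_def algebra_simps)
          also have "\<dots> = (\<Sum>i<j. (l' i - l i) * b i)"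
            by (simp add: sum_subtractf algebra_simps)
          finally have "v = inverse d * (\<Sum>i<j. (l' i - l i) * b i)"
            using d0 by (simp add: field_simps)
          also have "\<dots> = (\<Sum>i<j. m i * b i)"
            by (simp add: sum_distrib_left m_def mult.assoc)
          finally have "v \<in> (\<lambda>l. \<Sum>i<j. l i * b i) ` Lam S j" using mL by blast
          then show False using v(2) by blast
        qed
        have s2: "(\<Sum>i<j. l i * b i) = (\<Sum>i<j. l' i * b i)" using eq2 ljeq by simp
        have r: "l(j:=0) \<in> Lam S j" "l'(j:=0) \<in> Lam S j"
          using l l' by (auto simp: Lam_def less_Suc_eq)
        have "(\<Sum>i<j. (l(j:=0)) i * b i) = (\<Sum>i<j. (l'(j:=0)) i * b i)"
          using s2 by simp
        then have "l(j:=0) = l'(j:=0)" using inj_onD[OF b(2) _ r] by simp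
        then show "l = l'" using ljeq by (metis fun_upd_triv fun_upd_upd)
      qed
    qed
    then show False using j(2) by fastforce
  qed
  show ?thesis using b surj unfolding bij_betw_def by blast
qed


lemma ff_power_card: "(x::'a::{finite,field}) ^ CARD('a) = x"
proof (cases "x = 0")
  case False
  have "x * (\<Prod>y\<in>UNIV-{0}. x * y) = x * x ^ (card (UNIV :: 'a set) - 1) * \<Prod>(UNIV-{0})"
    by (simp add: prod.distrib mult_ac)
  also have "x * x ^ (card (UNIV :: 'a set) - 1) = x ^ Suc (card (UNIV :: 'a set) - 1)"
    by (subst power_Suc) auto
  also have "Suc (card (UNIV :: 'a set) - 1) = card (UNIV :: 'a set)"
    using finite_UNIV_card_ge_0[where ?'a = 'a] by simp
  also have "(\<Prod>y\<in>UNIV-{0}. x * y) = (\<Prod>y\<in>UNIV-{0}. y)"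
    by (rule prod.reindex_bij_witness[of _ "\<lambda>y. y / x" "\<lambda>y. x * y"]) (use False in auto)
  finally show ?thesis
    by simp
qed (use finite_UNIV_card_ge_0[where ?'a = 'a] in auto)

lemma ff_card_ge2: "2 \<le> CARD('a::{finite,field})"
proof -
  have "{0,1} \<subseteq> (UNIV::'a set)" by auto
  then have "card {0,1::'a} \<le> CARD('a)" by (rule card_mono[rotated]) simp
  then show ?thesis by simp
qed

lemma ff_CHAR_prime: "Factorial_Ring.prime CHAR('a::{finite,field})"
  using finite_imp_CHAR_pos[where ?'a='a] prime_CHAR_semidom[where ?'a='a] by simp

lemma ff_card_prime_power: "\<exists>k. CARD('a::{finite,field}) = CHAR('a) ^ k"
proof -
  define p where "p = CHAR('a)"
  have pp: "Factorial_Ring.prime p" unfolding p_def by (rule ff_CHAR_prime)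
  then have p1: "p \<ge> 1" using prime_ge_1_nat by blast
  define S where "S = range (of_nat :: nat \<Rightarrow> 'a)"
  have ofmod: "(of_nat n :: 'a) = of_nat (n mod p)" for n
  proof -
    have "n = n mod p + p * (n div p)" by simp
    then have "(of_nat n::'a) = of_nat (n mod p) + of_nat p * of_nat (n div p)"
      by (metis of_nat_add of_nat_mult)
    then show ?thesis by (simp add: p_def)
  qed
  have Seq: "S = of_nat ` {..<p}"
  proof
    show "S \<subseteq> of_nat ` {..<p}"
    proof
      fix x assume "x \<in> S"
      then obtain n where "x = of_nat n" by (auto simp: S_def)
      then have "x = of_nat (n mod p)" using ofmod by simp
      moreover have "n mod p \<in> {..<p}" using pp by (simp add: prime_gt_0_nat)
      ultimately show "x \<in> of_nat ` {..<p}" by blast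
    qed
  qed (auto simp: S_def)
  have inj: "inj_on (of_nat :: nat \<Rightarrow> 'a) {..<p}"
  proof (rule inj_onI)
    fix i j assume i: "i \<in> {..<p}" and j: "j \<in> {..<p}" and eq: "(of_nat i :: 'a) = of_nat j"
    show "i = j"
    proof (rule ccontr)
      assume "i \<noteq> j"
      then consider "i < j" | "j < i" by linarith
      then show False
      proof cases
        case 1
        then have "(of_nat (j - i) :: 'a) = 0" using eq by (simp add: of_nat_diff)
        then have "p dvd (j - i)" by (simp add: of_nat_eq_0_iff_char_dvd p_def)
        then show False using dvd_imp_le[of p "j - i"] 1 j by auto
      next
        case 2
        then have "(of_nat (i - j) :: 'a) = 0" using eq by (simp add: of_nat_diff)
        then have "p dvd (i - j)" by (simp add: of_nat_eq_0_iff_char_dvd p_def)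
        then show False using dvd_imp_le[of p "i - j"] 2 i by auto
      qed
    qed
  qed
  have cardS: "card S = p" using Seq inj by (simp add: card_image)
  have q2: "CARD('a) \<ge> 2" by (rule ff_card_ge2)
  have Sinv: "inverse a \<in> S" if "a \<in> S" for a
  proof (cases "a = 0")
    case True then show ?thesis using that by simp
  next
    case False
    define c where "c = CARD('a) - 2"
    have cc: "CARD('a) = Suc (Suc c)" using q2 unfolding c_def by simp
    have "a * (a * a ^ c) = a" using ff_power_card[of a] unfolding cc by simp
    then have "a * a ^ c = 1" using False by simp
    then have "inverse a = a ^ c" by (rule inverse_unique)
    moreover obtain j where "a = of_nat j" using \<open>a \<in> S\<close> S_def by blast
    ultimately show ?thesis unfolding S_def by (simp flip: of_nat_power)
  qed
  have Sneg: "- a \<in> S" if "a \<in> S" for a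
  proof -
    obtain j where j: "a = of_nat j" using \<open>a \<in> S\<close> S_def by blast
    have "(of_nat ((p - 1) * j) :: 'a) = (of_nat p - 1) * of_nat j"
      using p1 by (simp add: of_nat_diff)
    also have "\<dots> = - a" by (simp add: p_def j)
    finally show ?thesis unfolding S_def by (metis rangeI)
  qed
  have S0: "0 \<in> S" "1 \<in> S" unfolding S_def by (metis of_nat_0 rangeI, metis of_nat_1 rangeI)
  have Sadd: "a + b \<in> S" "a * b \<in> S" if "a \<in> S" "b \<in> S" for a b
    using that unfolding S_def by (auto simp flip: of_nat_add of_nat_mult)
  have fS: "finite S" by simp
  obtain k b where kb: "bij_betw (\<lambda>l. \<Sum>i<k. l i * b i) (Lam S k) (UNIV::'a set)"
    using basis_exists_G[of S "UNIV::'a set", OF fS S0 Sadd(1) Sadd(2) Sneg Sinv] by auto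
  have "finite S" by simp
  then have "CARD('a) = p ^ k" using bij_betw_same_card[OF kb] card_Lam[of S k] cardS by simp
  then show ?thesis unfolding p_def by blast
qed


lemma ff_power_card_pow: "(x::'a::{finite,field}) ^ (CARD('a) ^ j) = x"
  by (induction j) (simp_all add: power_mult ff_power_card)

lemma frob_add:
  fixes x y :: "'a::{finite,field} alg_closure"
  shows "(x + y) ^ (CARD('a) ^ j) = x ^ (CARD('a) ^ j) + y ^ (CARD('a) ^ j)"
proof -
  obtain k where k: "CARD('a) = CHAR('a) ^ k" using ff_card_prime_power by blast
  have "CARD('a) ^ j = CHAR('a alg_closure) ^ (k * j)" by (simp add: k power_mult)
  moreover have "Factorial_Ring.prime CHAR('a alg_closure)" using ff_CHAR_prime[where 'a='a] by simp
  ultimately show ?thesis using freshmans_dream' by blast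
qed

lemma frob_zero: "(0::'a::{finite,field} alg_closure) ^ (CARD('a) ^ j) = 0"
  by simp

lemma frob_neg:
  fixes x :: "'a::{finite,field} alg_closure"
  shows "(- x) ^ (CARD('a) ^ j) = - (x ^ (CARD('a) ^ j))"
proof -
  have "x ^ (CARD('a) ^ j) + (- x) ^ (CARD('a) ^ j) = (x + - x) ^ (CARD('a) ^ j)"
    by (simp only: frob_add)
  also have "\<dots> = 0" by simp
  finally show ?thesis by (simp add: eq_neg_iff_add_eq_0 add.commute)
qed

lemma frob_diff:
  fixes x y :: "'a::{finite,field} alg_closure"
  shows "(x - y) ^ (CARD('a) ^ j) = x ^ (CARD('a) ^ j) - y ^ (CARD('a) ^ j)"
  using frob_add[of x "-y" j] frob_neg[of y j] by simp

lemma frob_to_ac: "to_ac (a::'a::{finite,field}) ^ (CARD('a) ^ j) = to_ac a"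
  by (metis to_ac_power ff_power_card_pow)

lemma frob_scal:
  fixes x :: "'a::{finite,field} alg_closure"
  shows "(to_ac a * x) ^ (CARD('a) ^ j) = to_ac a * x ^ (CARD('a) ^ j)"
  by (simp add: power_mult_distrib frob_to_ac)

lemma frob_sum:
  fixes f :: "'b \<Rightarrow> 'a::{finite,field} alg_closure"
  shows "(sum f A) ^ (CARD('a) ^ j) = (\<Sum>i\<in>A. f i ^ (CARD('a) ^ j))"
  by (induction A rule: infinite_finite_induct) (simp_all add: frob_add)

definition FL :: "nat \<Rightarrow> 'a::{finite,field} alg_closure set" where
  "FL N = {x. x ^ (CARD('a) ^ N) = x}"

lemma FL_add: "x \<in> FL N \<Longrightarrow> y \<in> FL N \<Longrightarrow> x + y \<in> FL N"
  by (simp add: FL_def frob_add)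
lemma FL_diff: "x \<in> FL N \<Longrightarrow> y \<in> FL N \<Longrightarrow> x - y \<in> FL N"
  by (simp add: FL_def frob_diff)
lemma FL_mult: "x \<in> FL N \<Longrightarrow> y \<in> FL N \<Longrightarrow> x * y \<in> FL N"
  by (simp add: FL_def power_mult_distrib)
lemma FL_zero: "0 \<in> FL N" by (simp add: FL_def)
lemma FL_scal: "x \<in> FL N \<Longrightarrow> to_ac a * x \<in> FL N"
  by (simp add: FL_def frob_scal)
lemma FL_frob:
  fixes x :: "'a::{finite,field} alg_closure"
  assumes "x \<in> FL N"
  shows "x ^ (CARD('a) ^ j) \<in> FL N"
proof -
  from assms have "x ^ (CARD('a) ^ N) = x" by (simp add: FL_def)
  then have "(x ^ (CARD('a) ^ j)) ^ (CARD('a) ^ N) = x ^ (CARD('a) ^ j)"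
    by (metis power_mult mult.commute)
  then show ?thesis by (simp add: FL_def)
qed
lemma FL_sum: "finite A \<Longrightarrow> (\<And>i. i \<in> A \<Longrightarrow> f i \<in> FL N) \<Longrightarrow> sum f A \<in> FL N"
  by (rule sum_closed[OF FL_zero]) (auto intro: FL_add)

lemma of_nat_card_0: "(of_nat (CARD('a::{finite,field})) :: 'a) = 0"
proof -
  obtain k where k: "CARD('a) = CHAR('a) ^ k" using ff_card_prime_power by blast
  have "k \<noteq> 0" using ff_card_ge2[where 'a='a] k by (cases k) auto
  then show ?thesis by (simp add: k)
qed

lemma card_FL:
  assumes N: "N \<ge> 1"
  shows "finite (FL N :: 'a::{finite,field} alg_closure set) \<and> card (FL N :: 'a alg_closure set) = CARD('a) ^ N"
proof -
  define Q where "Q = CARD('a) ^ N"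
  have Q2: "Q \<ge> 2"
  proof -
    have "CARD('a) ^ 1 \<le> CARD('a) ^ N" using N ff_card_ge2[where 'a='a] by (intro power_increasing) auto
    then show ?thesis using ff_card_ge2[where 'a='a] unfolding Q_def by simp
  qed
  define P :: "'a alg_closure poly" where "P = Polynomial.monom 1 Q - [:0,1:]"
  have polyP: "poly P x = x ^ Q - x" for x by (simp add: P_def poly_monom)
  have roots: "{x. poly P x = 0} = FL N" by (auto simp: polyP FL_def Q_def)
  have QS: "Q = Suc (Suc (Q - 2))" using Q2 by simp
  have "Polynomial.coeff [:0,1:] (Suc (Suc (Q - 2))) = (0::'a alg_closure)" by (simp only: coeff_pCons_Suc) simp
  then have "Polynomial.coeff [:0,1:] Q = (0::'a alg_closure)" using QS by metis
  then have cP: "Polynomial.coeff P Q = 1" by (simp add: P_def coeff_monom)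
  then have P0: "P \<noteq> 0" by auto
  have degP: "Polynomial.degree P = Q"
  proof (rule antisym)
    show "Polynomial.degree P \<le> Q" unfolding P_def
      by (rule degree_diff_le) (use Q2 degree_monom_le in auto)
    show "Q \<le> Polynomial.degree P" using cP by (intro le_degree) simp
  qed
  have fin: "finite (FL N :: 'a alg_closure set)" using poly_roots_finite[OF P0] roots by simp
  have le: "card (FL N :: 'a alg_closure set) \<le> Q" using card_poly_roots_bound[OF P0] roots degP by simp
  have ofQ: "(of_nat Q :: 'a alg_closure) = 0"
  proof -
    have "(of_nat Q :: 'a alg_closure) = to_ac (of_nat Q)" by simp
    also have "(of_nat Q :: 'a) = of_nat (CARD('a)) ^ N" by (simp add: Q_def)
    also have "\<dots> = 0" using N by (simp add: of_nat_card_0)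
    finally show ?thesis by simp
  qed
  have d1: "pderiv (Polynomial.monom (1::'a alg_closure) Q) = 0" by (simp add: pderiv_monom ofQ)
  have d2: "pderiv [:0,1::'a alg_closure:] = 1" by (simp add: pderiv_pCons one_pCons)
  have dP: "pderiv P = -1" by (simp add: P_def pderiv_diff d1 d2)
  obtain A where A: "size A = Polynomial.degree P"
      "P = Polynomial.smult (Polynomial.lead_coeff P) (\<Prod>x\<in>#A. [:-x, 1:])"
    using alg_closed_imp_factorization[OF P0] by blast
  have lc: "Polynomial.lead_coeff P = 1" using cP degP by simp
  have cnt: "count A x \<le> 1" for x
  proof (rule ccontr)
    assume "\<not> count A x \<le> 1"
    then have "x \<in># A" by (subst count_greater_zero_iff[symmetric]) linarith
    from multi_member_split[OF this] obtain B where B: "A = add_mset x B" by (elim exE)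
    have "count A x = Suc (count B x)" unfolding B by simp
    then have "count B x \<ge> 1" using \<open>\<not> count A x \<le> 1\<close> by linarith
    then have "x \<in># B" by (subst count_greater_zero_iff[symmetric]) linarith
    from multi_member_split[OF this] obtain C where C: "B = add_mset x C" by (elim exE)
    define r where "r = [:-x,1::'a alg_closure:]"
    define g where "g = (\<Prod>y\<in>#C. [:-y, 1::'a alg_closure:])"
    have P2: "P = r * (r * g)" using A(2) lc B C by (simp add: r_def g_def)
    have r0: "poly r x = 0" by (simp add: r_def)
    have "poly (pderiv P) x = 0" unfolding P2 pderiv_mult poly_add poly_mult r0 by simp
    then show False using dP by simp
  qed
  have sub: "set_mset A \<subseteq> FL N"
  proof
    fix x assume "x \<in> set_mset A"
    from multi_member_split[OF this] obtain B where B: "A = add_mset x B" by (elim exE)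
    have "poly P x = 0" using A(2) lc B by (simp add: poly_prod_mset)
    then show "x \<in> FL N" using roots by blast
  qed
  have "Q = size A" using A(1) degP by simp
  also have "\<dots> = sum (count A) (set_mset A)" by (rule size_multiset_overloaded_eq)
  also have "\<dots> \<le> sum (\<lambda>_. 1) (set_mset A)" using cnt by (intro sum_mono) auto
  also have "\<dots> = card (set_mset A)" by simp
  also have "\<dots> \<le> card (FL N :: 'a alg_closure set)" using card_mono[OF fin sub] .
  finally show ?thesis using le fin unfolding Q_def by simp
qed




lemma range_to_ac_closed:
  shows "0 \<in> range (to_ac :: 'a::{finite,field} \<Rightarrow> _)" "1 \<in> range (to_ac :: 'a \<Rightarrow> _)"
    "a \<in> range to_ac \<Longrightarrow> b \<in> range to_ac \<Longrightarrow> a + b \<in> range (to_ac :: 'a \<Rightarrow> _)"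
    "a \<in> range to_ac \<Longrightarrow> b \<in> range to_ac \<Longrightarrow> a * b \<in> range (to_ac :: 'a \<Rightarrow> _)"
    "a \<in> range to_ac \<Longrightarrow> - a \<in> range (to_ac :: 'a \<Rightarrow> _)"
    "a \<in> range to_ac \<Longrightarrow> inverse a \<in> range (to_ac :: 'a \<Rightarrow> _)"
  by (metis to_ac_0 rangeI, metis to_ac_1 rangeI, auto simp flip: to_ac_add to_ac_mult to_ac_minus to_ac_inverse)

lemma FL_basis:
  assumes N: "N \<ge> 1"
  shows "\<exists>\<beta>::nat \<Rightarrow> 'a::{finite,field} alg_closure. (\<forall>i<N. \<beta> i \<in> FL N) \<and>
     (\<forall>u. (\<Sum>i<N. to_ac (u i) * \<beta> i) = 0 \<longrightarrow> (\<forall>i<N. u i = 0)) \<and>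
     (\<forall>y\<in>FL N. \<exists>u. y = (\<Sum>i<N. to_ac (u i) * \<beta> i))"
proof -
  define S where "S = range (to_ac :: 'a \<Rightarrow> 'a alg_closure)"
  have fS: "finite S" unfolding S_def by simp
  have cS: "card S = CARD('a)" unfolding S_def by (metis card_image inj_to_ac)
  have fin: "finite (FL N :: 'a alg_closure set)" and cFL: "card (FL N :: 'a alg_closure set) = CARD('a) ^ N"
    using card_FL[OF N] by auto
  have Sc: "0 \<in> S" "1 \<in> S" "\<And>a b. a\<in>S \<Longrightarrow> b\<in>S \<Longrightarrow> a+b \<in> S"
    "\<And>a b. a\<in>S \<Longrightarrow> b\<in>S \<Longrightarrow> a*b\<in>S" "\<And>a. a\<in>S \<Longrightarrow> -a \<in>S" "\<And>a. a\<in>S \<Longrightarrow> inverse a \<in> S"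
    unfolding S_def by (rule range_to_ac_closed; assumption?)+
  have Vs: "\<And>a x. a\<in>S \<Longrightarrow> x\<in>FL N \<Longrightarrow> a*x \<in> FL N" unfolding S_def using FL_scal by blast
  obtain k and b :: "nat \<Rightarrow> 'a alg_closure" where kb: "\<forall>i<k. b i \<in> FL N"
      "bij_betw (\<lambda>l. \<Sum>i<k. l i * b i) (Lam S k) (FL N)"
    using basis_exists_G[of S "FL N", OF fS Sc fin FL_zero FL_add Vs] by blast
  have "card (Lam S k) = CARD('a) ^ k" using card_Lam[OF fS] cS by simp
  then have "CARD('a) ^ k = CARD('a) ^ N" using bij_betw_same_card[OF kb(2)] cFL by simp
  then have kN: "k = N" using ff_card_ge2[where 'a='a] by (simp add: power_inject_exp)
  have inj: "inj_on (\<lambda>l. \<Sum>i<N. l i * b i) (Lam S N)" using kb(2) kN by (simp add: bij_betw_def)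
  have sur: "(\<lambda>l. \<Sum>i<N. l i * b i) ` (Lam S N) = FL N" using kb(2) kN by (simp add: bij_betw_def)
  show ?thesis
  proof (intro exI conjI)
    show "\<forall>i<N. b i \<in> FL N" using kb(1) kN by simp
    show "\<forall>u::nat \<Rightarrow> 'a. (\<Sum>i<N. to_ac (u i) * b i) = 0 \<longrightarrow> (\<forall>i<N. u i = 0)"
    proof (intro allI impI)
    fix u :: "nat \<Rightarrow> 'a" and i assume z: "(\<Sum>i<N. to_ac (u i) * b i) = 0" and i: "i < N"
    define l where "l j = (if j < N then to_ac (u j) else 0)" for j
    have l: "l \<in> Lam S N" unfolding Lam_def l_def S_def by auto
    have z0: "(\<lambda>_. 0) \<in> Lam S N" unfolding Lam_def S_def using range_to_ac_closed(1) by auto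
    have "(\<Sum>j<N. l j * b j) = (\<Sum>j<N. to_ac (u j) * b j)" by (rule sum.cong) (auto simp: l_def)
    then have "(\<Sum>j<N. l j * b j) = (\<Sum>j<N. (\<lambda>_. 0) j * b j)" using z by simp
    then have "l = (\<lambda>_. 0)" using inj_onD[OF inj _ l z0] by blast
    then have "to_ac (u i) = 0" using i unfolding l_def by (metis (full_types))
    then show "u i = 0" by simp
    qed
    show "\<forall>y\<in>FL N. \<exists>u::nat \<Rightarrow> 'a. y = (\<Sum>i<N. to_ac (u i) * b i)"
    proof
    fix y :: "'a alg_closure" assume y: "y \<in> FL N"
    then obtain l where l: "l \<in> Lam S N" "y = (\<Sum>i<N. l i * b i)" using sur by blast
    have "(\<Sum>i<N. l i * b i) = (\<Sum>i<N. to_ac (of_ac (l i)) * b i)"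
      by (rule sum.cong) (use l(1) in \<open>auto simp: Lam_def S_def to_ac_of_ac\<close>)
    then have "y = (\<Sum>i<N. to_ac ((\<lambda>i. of_ac (l i)) i) * b i)" using l(2) by simp
    then show "\<exists>u::nat \<Rightarrow> 'a. y = (\<Sum>i<N. to_ac (u i) * b i)" by (rule exI[where x="\<lambda>i. of_ac (l i)"])
    qed
  qed
qed


definition linp :: "nat \<Rightarrow> (nat \<Rightarrow> 'a::{finite,field} alg_closure) \<Rightarrow> 'a alg_closure \<Rightarrow> 'a alg_closure" where
  "linp s c x = (\<Sum>j<s. c j * x ^ (CARD('a) ^ j))"

lemma linp_add: "linp s c (x + y) = linp s c x + linp s c y"
  by (simp add: linp_def frob_add distrib_left sum.distrib)

lemma linp_scal: "linp s c (to_ac a * x) = to_ac a * linp s c x"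
  by (simp add: linp_def frob_scal sum_distrib_left mult.left_commute)

lemma linp_zero: "linp s (c::nat \<Rightarrow> 'a::{finite,field} alg_closure) 0 = 0"
proof -
  have "0 < CARD('a) ^ j" for j by simp
  then show ?thesis by (simp add: linp_def zero_power)
qed

lemma linp_sum: "linp s c (sum f A) = (\<Sum>i\<in>A. linp s c (f i))"
  by (induction A rule: infinite_finite_induct) (simp_all add: linp_zero linp_add)

lemma linp_diff_coef: "linp s c x - linp s c' x = linp s (\<lambda>j. c j - c' j) x"
  by (simp add: linp_def sum_subtractf left_diff_distrib)

lemma linp_FL: "(\<forall>j<s. c j \<in> FL N) \<Longrightarrow> x \<in> FL N \<Longrightarrow> linp s c x \<in> FL N"
  unfolding linp_def by (rule FL_sum) (auto intro: FL_mult FL_frob)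

lemma linp_roots:
  fixes c :: "nat \<Rightarrow> 'a::{finite,field} alg_closure"
  assumes s: "s \<ge> 1" and nz: "j0 < s" "c j0 \<noteq> 0"
  shows "finite {x. linp s c x = 0} \<and> card {x. linp s c x = 0} \<le> CARD('a) ^ (s - 1)"
proof -
  define q where "q = CARD('a)"
  have q2: "q \<ge> 2" unfolding q_def by (rule ff_card_ge2)
  define P where "P = (\<Sum>j<s. Polynomial.monom (c j) (q ^ j))"
  have polyP: "poly P x = linp s c x" for x
    by (simp add: P_def linp_def poly_sum poly_monom q_def)
  have injq: "q ^ j = q ^ j0 \<longleftrightarrow> j = j0" for j using q2 by (simp add: power_inject_exp)
  have "Polynomial.coeff P (q ^ j0) = (\<Sum>j<s. Polynomial.coeff (Polynomial.monom (c j) (q ^ j)) (q ^ j0))"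
    by (simp add: P_def coeff_sum)
  also have "\<dots> = (\<Sum>j<s. if j = j0 then c j else 0)"
    by (rule sum.cong) (auto simp: coeff_monom injq)
  also have "\<dots> = c j0" using nz(1) by simp
  finally have cP: "Polynomial.coeff P (q ^ j0) \<noteq> 0" using nz(2) by simp
  then have P0: "P \<noteq> 0" by auto
  have degP: "Polynomial.degree P \<le> q ^ (s - 1)" unfolding P_def
  proof (rule degree_sum_le)
    fix j assume "j \<in> {..<s}"
    then have "q ^ j \<le> q ^ (s - 1)" using q2 by (intro power_increasing) auto
    then show "Polynomial.degree (Polynomial.monom (c j) (q ^ j)) \<le> q ^ (s - 1)"
      using degree_monom_le order_trans by blast
  qed simp
  have "{x. linp s c x = 0} = {x. poly P x = 0}" by (simp add: polyP)
  then show ?thesis using poly_roots_finite[OF P0] card_poly_roots_bound[OF P0] degP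
    unfolding q_def by auto
qed


definition indepE :: "(nat \<Rightarrow> 'a::{finite,field} alg_closure) \<Rightarrow> nat set \<Rightarrow> bool" where
  "indepE v J \<longleftrightarrow> (\<forall>l::nat \<Rightarrow> 'a. (\<Sum>j\<in>J. to_ac (l j) * v j) = 0 \<longrightarrow> (\<forall>j\<in>J. l j = 0))"

definition spanE :: "(nat \<Rightarrow> 'a::{finite,field} alg_closure) \<Rightarrow> nat set \<Rightarrow> 'a alg_closure set" where
  "spanE v J = range (\<lambda>l::nat \<Rightarrow> 'a. \<Sum>j\<in>J. to_ac (l j) * v j)"

lemma spanE_I: "x = (\<Sum>j\<in>J. to_ac (l j) * w j) \<Longrightarrow> x \<in> spanE w J"
  unfolding spanE_def by blast

lemma card_spanE:
  fixes v :: "nat \<Rightarrow> 'a::{finite,field} alg_closure"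
  assumes "finite J"
  shows "card (spanE v J) \<le> CARD('a) ^ card J"
proof -
  have eq: "spanE v J = (\<lambda>l::nat \<Rightarrow> 'a. \<Sum>j\<in>J. to_ac (l j) * v j) ` (J \<rightarrow>\<^sub>E UNIV)"
  proof
    show "spanE v J \<subseteq> (\<lambda>l::nat \<Rightarrow> 'a. \<Sum>j\<in>J. to_ac (l j) * v j) ` (J \<rightarrow>\<^sub>E UNIV)"
    proof
      fix x assume "x \<in> spanE v J"
      then obtain l :: "nat \<Rightarrow> 'a" where l: "x = (\<Sum>j\<in>J. to_ac (l j) * v j)" by (auto simp: spanE_def)
      have "x = (\<Sum>j\<in>J. to_ac (restrict l J j) * v j)" unfolding l by (rule sum.cong) auto
      moreover have "restrict l J \<in> J \<rightarrow>\<^sub>E UNIV" by simp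
      ultimately show "x \<in> (\<lambda>l::nat \<Rightarrow> 'a. \<Sum>j\<in>J. to_ac (l j) * v j) ` (J \<rightarrow>\<^sub>E UNIV)" by blast
    qed
  qed (auto simp: spanE_def)
  have "card (spanE v J) \<le> card (J \<rightarrow>\<^sub>E (UNIV :: 'a set))" unfolding eq by (rule card_image_le) (simp add: assms finite_PiE)
  also have "\<dots> = CARD('a) ^ card J" using card_funcsetE[OF assms, of "UNIV :: 'a set"] by simp
  finally show ?thesis .
qed

lemma maxindep_span:
  fixes v :: "nat \<Rightarrow> 'a::{finite,field} alg_closure"
  assumes U: "finite U" and J: "J \<subseteq> U" "indepE v J"
    and mx: "\<And>J'. J' \<subseteq> U \<Longrightarrow> indepE v J' \<Longrightarrow> card J' \<le> card J"
    and u: "u \<in> U"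
  shows "v u \<in> spanE v J"
proof (cases "u \<in> J")
  case True
  have fJ: "finite J" using U J finite_subset by blast
  have "(\<Sum>j\<in>J. to_ac ((\<lambda>j. if j = u then 1 else 0) j) * v j) = (\<Sum>j\<in>J. if j = u then v j else 0)"
    by (rule sum.cong) auto
  also have "\<dots> = v u" using True fJ by simp
  finally show ?thesis by (rule spanE_I[OF sym])
next
  case False
  have fJ: "finite J" using U J finite_subset by blast
  have "card (insert u J) = Suc (card J)" using False fJ by simp
  have "\<not> indepE v (insert u J)"
  proof
    assume "indepE v (insert u J)"
    then have "card (insert u J) \<le> card J" using mx J(1) u by blast
    then show False using \<open>card (insert u J) = Suc (card J)\<close> by simp
  qed
  then obtain l :: "nat \<Rightarrow> 'a" where l: "(\<Sum>j\<in>insert u J. to_ac (l j) * v j) = 0" "\<exists>j\<in>insert u J. l j \<noteq> 0"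
    unfolding indepE_def by blast
  have l2: "to_ac (l u) * v u + (\<Sum>j\<in>J. to_ac (l j) * v j) = 0"
    using l(1) False fJ by simp
  have lu: "l u \<noteq> 0"
  proof
    assume "l u = 0"
    then have "(\<Sum>j\<in>J. to_ac (l j) * v j) = 0" using l2 by simp
    then have "\<forall>j\<in>J. l j = 0" using J(2) unfolding indepE_def by blast
    then show False using l(2) \<open>l u = 0\<close> by auto
  qed
  define m where "m j = - l j / l u" for j
  have "(\<Sum>j\<in>J. to_ac (m j) * v j) = (\<Sum>j\<in>J. (- inverse (to_ac (l u))) * (to_ac (l j) * v j))"
    by (rule sum.cong) (simp_all add: m_def to_ac_divide to_ac_minus divide_inverse algebra_simps)
  also have "\<dots> = (- inverse (to_ac (l u))) * (\<Sum>j\<in>J. to_ac (l j) * v j)"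
    by (simp add: sum_distrib_left)
  also have "(\<Sum>j\<in>J. to_ac (l j) * v j) = - (to_ac (l u) * v u)" using l2 by (simp add: eq_neg_iff_add_eq_0 add.commute)
  also have "(- inverse (to_ac (l u))) * (- (to_ac (l u) * v u)) = v u" using lu by (simp add: field_simps)
  finally show ?thesis by (rule spanE_I[OF sym])
qed

lemma spanE_sum:
  fixes v :: "nat \<Rightarrow> 'a::{finite,field} alg_closure"
  assumes U: "finite U" and sp: "\<And>u. u \<in> U \<Longrightarrow> v u \<in> spanE v J"
  shows "(\<Sum>u\<in>U. to_ac (\<mu> u) * v u) \<in> spanE v J"
proof -
  have "\<forall>u\<in>U. \<exists>k::nat \<Rightarrow> 'a. v u = (\<Sum>j\<in>J. to_ac (k j) * v j)" using sp unfolding spanE_def by blast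
  from bchoice[OF this] obtain \<kappa> :: "nat \<Rightarrow> nat \<Rightarrow> 'a" where k: "\<And>u. u \<in> U \<Longrightarrow> v u = (\<Sum>j\<in>J. to_ac (\<kappa> u j) * v j)"
    by blast
  have "(\<Sum>u\<in>U. to_ac (\<mu> u) * v u) = (\<Sum>u\<in>U. \<Sum>j\<in>J. to_ac (\<mu> u * \<kappa> u j) * v j)"
  proof (rule sum.cong[OF refl])
    fix u assume "u \<in> U"
    have "to_ac (\<mu> u) * v u = to_ac (\<mu> u) * (\<Sum>j\<in>J. to_ac (\<kappa> u j) * v j)"
      using k[OF \<open>u \<in> U\<close>] by (rule arg_cong)
    also have "\<dots> = (\<Sum>j\<in>J. to_ac (\<mu> u * \<kappa> u j) * v j)"
      by (simp add: sum_distrib_left to_ac_mult mult.assoc)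
    finally show "to_ac (\<mu> u) * v u = (\<Sum>j\<in>J. to_ac (\<mu> u * \<kappa> u j) * v j)" .
  qed
  also have "\<dots> = (\<Sum>j\<in>J. \<Sum>u\<in>U. to_ac (\<mu> u * \<kappa> u j) * v j)" by (rule sum.swap)
  also have "\<dots> = (\<Sum>j\<in>J. to_ac (\<Sum>u\<in>U. \<mu> u * \<kappa> u j) * v j)"
    by (simp add: to_ac_sum sum_distrib_right)
  finally show ?thesis by (rule spanE_I)
qed

lemma exists_maxindep:
  fixes v :: "nat \<Rightarrow> 'a::{finite,field} alg_closure"
  assumes U: "finite U"
  shows "\<exists>J. J \<subseteq> U \<and> indepE v J \<and> (\<forall>J'. J' \<subseteq> U \<longrightarrow> indepE v J' \<longrightarrow> card J' \<le> card J)"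
proof -
  have P0: "{} \<subseteq> U \<and> indepE v {}" by (simp add: indepE_def)
  have "\<forall>y. y \<subseteq> U \<and> indepE v y \<longrightarrow> card y < card U + 1"
    using card_mono[OF U] by (simp add: le_imp_less_Suc)
  from Lattices_Big.ex_has_greatest_nat[of "\<lambda>J. J \<subseteq> U \<and> indepE v J", OF P0 this]
  show ?thesis by blast
qed



lemma swap_ac:
  fixes x :: "'c \<Rightarrow> 'a::{finite,field}" and z :: "'d \<Rightarrow> 'a alg_closure"
  shows "(\<Sum>a\<in>A. to_ac (x a) * (\<Sum>b\<in>B. to_ac (y a b) * z b)) = (\<Sum>b\<in>B. to_ac (\<Sum>a\<in>A. x a * y a b) * z b)"
proof -
  have "(\<Sum>a\<in>A. to_ac (x a) * (\<Sum>b\<in>B. to_ac (y a b) * z b)) = (\<Sum>a\<in>A. \<Sum>b\<in>B. to_ac (x a * y a b) * z b)"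
    by (simp add: sum_distrib_left to_ac_mult mult.assoc)
  also have "\<dots> = (\<Sum>b\<in>B. \<Sum>a\<in>A. to_ac (x a * y a b) * z b)" by (rule sum.swap)
  also have "\<dots> = (\<Sum>b\<in>B. to_ac (\<Sum>a\<in>A. x a * y a b) * z b)" by (simp add: to_ac_sum sum_distrib_right)
  finally show ?thesis .
qed

lemma finite_spanE:
  fixes v :: "nat \<Rightarrow> 'a::{finite,field} alg_closure"
  assumes "finite J"
  shows "finite (spanE v J)"
proof -
  have "spanE v J \<subseteq> (\<lambda>l::nat \<Rightarrow> 'a. \<Sum>j\<in>J. to_ac (l j) * v j) ` (J \<rightarrow>\<^sub>E UNIV)"
  proof
    fix x assume "x \<in> spanE v J"
    then obtain l :: "nat \<Rightarrow> 'a" where l: "x = (\<Sum>j\<in>J. to_ac (l j) * v j)" by (auto simp: spanE_def)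
    have "x = (\<Sum>j\<in>J. to_ac (restrict l J j) * v j)" unfolding l by (rule sum.cong) auto
    moreover have "restrict l J \<in> J \<rightarrow>\<^sub>E UNIV" by simp
    ultimately show "x \<in> (\<lambda>l::nat \<Rightarrow> 'a. \<Sum>j\<in>J. to_ac (l j) * v j) ` (J \<rightarrow>\<^sub>E UNIV)" by blast
  qed
  moreover have "finite (J \<rightarrow>\<^sub>E (UNIV::'a set))" using assms by (simp add: finite_PiE)
  ultimately show ?thesis using finite_subset by blast
qed

lemma indep_sub:
  fixes \<beta> :: "nat \<Rightarrow> 'a::{finite,field} alg_closure"
  assumes ind: "\<forall>u::nat \<Rightarrow> 'a. (\<Sum>i<N. to_ac (u i) * \<beta> i) = 0 \<longrightarrow> (\<forall>i<N. u i = 0)"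
    and I: "I \<subseteq> {..<N}" and z: "(\<Sum>i\<in>I. to_ac (u i) * \<beta> i) = 0"
  shows "\<forall>i\<in>I. u i = 0"
proof -
  define u' where "u' i = (if i \<in> I then u i else 0)" for i
  have "(\<Sum>i<N. to_ac (u' i) * \<beta> i) = (\<Sum>i\<in>I. to_ac (u i) * \<beta> i)"
    by (rule sum.mono_neutral_cong_right) (use I in \<open>auto simp: u'_def\<close>)
  then have "\<forall>i<N. u' i = 0" using ind z by simp
  then show ?thesis using I unfolding u'_def by (metis lessThan_iff subsetD)
qed


lemma row_part:
  fixes \<beta> :: "nat \<Rightarrow> 'a::{finite,field} alg_closure" and d :: "nat \<Rightarrow> 'a alg_closure"
  assumes ind: "\<forall>u::nat \<Rightarrow> 'a. (\<Sum>i<N. to_ac (u i) * \<beta> i) = 0 \<longrightarrow> (\<forall>i<N. u i = 0)"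
    and tN: "\<tau> \<le> N" and s1: "1 \<le> s" and st: "s \<le> \<tau>" and nz: "j0 < s" "d j0 \<noteq> 0"
  shows "\<exists>I \<subseteq> {..<\<tau>}. \<tau> - s + 1 \<le> card I \<and> indepE (\<lambda>i. linp s d (\<beta> i)) I"
proof -
  define w where "w i = linp s d (\<beta> i)" for i
  define q where "q = CARD('a)"
  have q2: "q \<ge> 2" unfolding q_def by (rule ff_card_ge2)
  obtain I where I: "I \<subseteq> {..<\<tau>}" "indepE w I"
      "\<And>J'. J' \<subseteq> {..<\<tau>} \<Longrightarrow> indepE w J' \<Longrightarrow> card J' \<le> card I"
    using exists_maxindep[of "{..<\<tau>}" w] by auto
  have fI: "finite I" using I(1) finite_subset by blast
  have sp: "w u \<in> spanE w I" if "u \<in> {..<\<tau>}" for u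
    using maxindep_span[of "{..<\<tau>}" I w u] I that by simp
  define \<Lambda> where "\<Lambda> = Lam (UNIV::'a set) \<tau>"
  have fL: "finite \<Lambda>" and cL: "card \<Lambda> = q ^ \<tau>" using card_Lam[of "UNIV::'a set" \<tau>] by (auto simp: \<Lambda>_def q_def)
  define \<phi> where "\<phi> l = (\<Sum>i<\<tau>. to_ac (l i) * w i)" for l :: "nat \<Rightarrow> 'a"
  have img: "\<phi> ` \<Lambda> \<subseteq> spanE w I"
  proof
    fix y assume "y \<in> \<phi> ` \<Lambda>"
    then obtain l where "y = \<phi> l" by blast
    then show "y \<in> spanE w I" unfolding \<phi>_def using spanE_sum[of "{..<\<tau>}" w I] sp by simp
  qed
  have c1: "card (\<phi> ` \<Lambda>) \<le> q ^ card I"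
    using card_mono[OF finite_spanE[OF fI] img] card_spanE[OF fI, of w] unfolding q_def by linarith
  define Z where "Z = {x. linp s d x = 0}"
  have fZ: "finite Z" and cZ: "card Z \<le> q ^ (s - 1)"
    using linp_roots[of s j0 d, OF s1 nz] unfolding Z_def q_def by auto
  have fib: "card {l\<in>\<Lambda>. \<phi> l = y} \<le> q ^ (s - 1)" if y: "y \<in> \<phi> ` \<Lambda>" for y
  proof -
    obtain l0 where l0: "l0 \<in> \<Lambda>" "\<phi> l0 = y" using y by blast
    define g where "g l = (\<Sum>i<\<tau>. to_ac (l i - l0 i) * \<beta> i)" for l :: "nat \<Rightarrow> 'a"
    have "inj_on g {l\<in>\<Lambda>. \<phi> l = y}"
    proof (rule inj_onI)
      fix l l' assume l: "l \<in> {l\<in>\<Lambda>. \<phi> l = y}" and l': "l' \<in> {l\<in>\<Lambda>. \<phi> l = y}" and eq: "g l = g l'"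
      have "g l - g l' = (\<Sum>i<\<tau>. to_ac (l i - l' i) * \<beta> i)"
        unfolding g_def by (simp add: sum_subtractf[symmetric] to_ac_diff algebra_simps)
      then have z: "(\<Sum>i\<in>{..<\<tau>}. to_ac (l i - l' i) * \<beta> i) = 0" using eq by simp
      have "\<forall>i\<in>{..<\<tau>}. l i - l' i = 0" by (rule indep_sub[OF ind _ z]) (use tN in auto)
      then have "\<forall>i<\<tau>. l i = l' i" by simp
      moreover have "\<forall>i\<ge>\<tau>. l i = l' i" using l l' by (simp add: \<Lambda>_def Lam_def)
      ultimately show "l = l'" by (metis not_less ext)
    qed
    moreover have "g ` {l\<in>\<Lambda>. \<phi> l = y} \<subseteq> Z"
    proof
      fix x assume "x \<in> g ` {l\<in>\<Lambda>. \<phi> l = y}"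
      then obtain l where l: "l \<in> \<Lambda>" "\<phi> l = y" "x = g l" by blast
      have "linp s d (g l) = (\<Sum>i<\<tau>. to_ac (l i - l0 i) * w i)"
        unfolding g_def w_def by (simp add: linp_sum linp_scal del: to_ac_diff)
      also have "\<dots> = \<phi> l - \<phi> l0"
        unfolding \<phi>_def by (simp add: sum_subtractf[symmetric] to_ac_diff algebra_simps)
      also have "\<dots> = 0" using l l0 by simp
      finally show "x \<in> Z" using l(3) by (simp add: Z_def)
    qed
    ultimately have "card {l\<in>\<Lambda>. \<phi> l = y} \<le> card Z" using card_inj_on_le fZ by blast
    then show ?thesis using cZ by simp
  qed
  have "\<Lambda> = (\<Union>y\<in>\<phi> ` \<Lambda>. {l\<in>\<Lambda>. \<phi> l = y})" by blast
  then have "card \<Lambda> \<le> (\<Sum>y\<in>\<phi> ` \<Lambda>. card {l\<in>\<Lambda>. \<phi> l = y})"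
    using card_UN_le[of "\<phi> ` \<Lambda>" "\<lambda>y. {l\<in>\<Lambda>. \<phi> l = y}"] fL by simp
  also have "\<dots> \<le> card (\<phi> ` \<Lambda>) * q ^ (s - 1)"
    using sum_bounded_above[of "\<phi> ` \<Lambda>" "\<lambda>y. card {l\<in>\<Lambda>. \<phi> l = y}" "q ^ (s - 1)"] fib by simp
  also have "\<dots> \<le> q ^ card I * q ^ (s - 1)" using c1 by simp
  finally have "q ^ \<tau> \<le> q ^ (card I + (s - 1))" using cL by (simp add: power_add)
  then have "\<tau> \<le> card I + (s - 1)" using q2 by (simp add: power_le_imp_le_exp)
  then have "\<tau> - s + 1 \<le> card I" using s1 st by linarith
  then show ?thesis using I(1,2) unfolding w_def by blast
qed


lemma col_part:
  fixes \<beta> :: "nat \<Rightarrow> 'a::{finite,field} alg_closure" and D :: "nat \<Rightarrow> nat \<Rightarrow> 'a"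
  assumes ind: "\<forall>u::nat \<Rightarrow> 'a. (\<Sum>i<N. to_ac (u i) * \<beta> i) = 0 \<longrightarrow> (\<forall>i<N. u i = 0)"
    and I: "I \<subseteq> {..<N}"
    and rowind: "\<forall>l. (\<forall>k<N. (\<Sum>i\<in>I. l i * D i k) = 0) \<longrightarrow> (\<forall>i\<in>I. l i = 0)"
  shows "\<exists>K \<subseteq> {..<N}. card I \<le> card K \<and> (\<forall>l. (\<forall>i\<in>I. (\<Sum>k\<in>K. l k * D i k) = 0) \<longrightarrow> (\<forall>k\<in>K. l k = 0))"
proof -
  define q where "q = CARD('a)"
  have q2: "q \<ge> 2" unfolding q_def by (rule ff_card_ge2)
  have fI: "finite I" using I finite_subset by blast
  define u where "u k = (\<Sum>i\<in>I. to_ac (D i k) * \<beta> i)" for k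
  obtain K where K: "K \<subseteq> {..<N}" "indepE u K"
      "\<And>J'. J' \<subseteq> {..<N} \<Longrightarrow> indepE u J' \<Longrightarrow> card J' \<le> card K"
    using exists_maxindep[of "{..<N}" u] by auto
  have fK: "finite K" using K(1) finite_subset by blast
  have cIK: "card I \<le> card K"
  proof (rule ccontr)
    assume "\<not> card I \<le> card K"
    then have lt: "card K < card I" by simp
    define dom where "dom = I \<rightarrow>\<^sub>E (UNIV :: 'a set)"
    define cod where "cod = K \<rightarrow>\<^sub>E (UNIV :: 'a set)"
    define \<psi> where "\<psi> \<nu> = restrict (\<lambda>k. \<Sum>i\<in>I. \<nu> i * D i k) K" for \<nu> :: "nat \<Rightarrow> 'a"
    have cd: "card dom = q ^ card I" unfolding dom_def q_def using card_funcsetE[OF fI, of "UNIV::'a set"] by simp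
    have cc: "card cod = q ^ card K" unfolding cod_def q_def using card_funcsetE[OF fK, of "UNIV::'a set"] by simp
    have fc: "finite cod" unfolding cod_def using fK by (simp add: finite_PiE)
    have sub: "\<psi> ` dom \<subseteq> cod" unfolding \<psi>_def cod_def by auto
    have "q ^ card K < q ^ card I" using q2 lt by (simp add: power_strict_increasing)
    then have "\<not> inj_on \<psi> dom" using card_inj_on_le[OF _ sub fc] cd cc by linarith
    then obtain \<nu> \<nu>' where nn: "\<nu> \<in> dom" "\<nu>' \<in> dom" "\<psi> \<nu> = \<psi> \<nu>'" "\<nu> \<noteq> \<nu>'"
      unfolding inj_on_def by blast
    obtain i0 where i0: "i0 \<in> I" "\<nu> i0 \<noteq> \<nu>' i0"
      using nn(1,2,4) PiE_ext[of \<nu> I "\<lambda>_. UNIV" \<nu>'] unfolding dom_def by blast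
    define \<eta> where "\<eta> i = \<nu> i - \<nu>' i" for i
    have hK: "(\<Sum>i\<in>I. \<eta> i * D i k) = 0" if k: "k \<in> K" for k
    proof -
      have "\<psi> \<nu> k = \<psi> \<nu>' k" using nn(3) by simp
      then have "(\<Sum>i\<in>I. \<nu> i * D i k) = (\<Sum>i\<in>I. \<nu>' i * D i k)" using k by (simp add: \<psi>_def)
      then show ?thesis by (simp add: \<eta>_def left_diff_distrib sum_subtractf)
    qed
    have hall: "(\<Sum>i\<in>I. \<eta> i * D i k) = 0" if k: "k < N" for k
    proof -
      have "u k \<in> spanE u K" using maxindep_span[of "{..<N}" K u k] K k by simp
      then obtain \<kappa> :: "nat \<Rightarrow> 'a" where ka: "u k = (\<Sum>k'\<in>K. to_ac (\<kappa> k') * u k')"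
        unfolding spanE_def by blast
      have "(\<Sum>k'\<in>K. to_ac (\<kappa> k') * u k') = (\<Sum>i\<in>I. to_ac (\<Sum>k'\<in>K. \<kappa> k' * D i k') * \<beta> i)"
        unfolding u_def by (rule swap_ac)
      then have "(\<Sum>i\<in>I. to_ac (D i k) * \<beta> i) - (\<Sum>i\<in>I. to_ac (\<Sum>k'\<in>K. \<kappa> k' * D i k') * \<beta> i) = 0"
        using ka unfolding u_def by simp
      then have "(\<Sum>i\<in>I. to_ac (D i k - (\<Sum>k'\<in>K. \<kappa> k' * D i k')) * \<beta> i) = 0"
        by (simp add: sum_subtractf[symmetric] left_diff_distrib del: to_ac_sum)
      then have "\<forall>i\<in>I. D i k - (\<Sum>k'\<in>K. \<kappa> k' * D i k') = 0" by (rule indep_sub[OF ind I])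
      then have Deq: "\<forall>i\<in>I. D i k = (\<Sum>k'\<in>K. \<kappa> k' * D i k')" by simp
      have "(\<Sum>i\<in>I. \<eta> i * D i k) = (\<Sum>i\<in>I. \<eta> i * (\<Sum>k'\<in>K. \<kappa> k' * D i k'))"
        using Deq by (intro sum.cong) auto
      also have "\<dots> = (\<Sum>i\<in>I. \<Sum>k'\<in>K. \<kappa> k' * (\<eta> i * D i k'))"
        by (simp add: sum_distrib_left mult.left_commute)
      also have "\<dots> = (\<Sum>k'\<in>K. \<Sum>i\<in>I. \<kappa> k' * (\<eta> i * D i k'))" by (rule sum.swap)
      also have "\<dots> = (\<Sum>k'\<in>K. \<kappa> k' * (\<Sum>i\<in>I. \<eta> i * D i k'))" by (simp add: sum_distrib_left)
      also have "\<dots> = 0" using hK by simp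
      finally show ?thesis .
    qed
    then have "\<forall>i\<in>I. \<eta> i = 0" using rowind by blast
    then show False using i0 by (simp add: \<eta>_def)
  qed
  have colind: "\<forall>k\<in>K. l k = 0" if h: "\<forall>i\<in>I. (\<Sum>k\<in>K. l k * D i k) = 0" for l
  proof -
    have "(\<Sum>k\<in>K. to_ac (l k) * u k) = (\<Sum>i\<in>I. to_ac (\<Sum>k\<in>K. l k * D i k) * \<beta> i)"
      unfolding u_def by (rule swap_ac)
    also have "\<dots> = 0" using h by simp
    finally show ?thesis using K(2) unfolding indepE_def by blast
  qed
  show ?thesis using K(1) cIK colind by blast
qed


lemma mrd_exists:
  assumes s1: "1 \<le> s" and st: "s \<le> \<tau>" and tN: "\<tau> \<le> N"
  shows "\<exists>(M :: (nat \<Rightarrow> 'a::{finite,field} alg_closure) set) (A :: (nat \<Rightarrow> 'a alg_closure) \<Rightarrow> nat \<Rightarrow> nat \<Rightarrow> 'a).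
     finite M \<and> card M = CARD('a) ^ (N * s) \<and>
     (\<forall>c\<in>M. \<forall>c'\<in>M. c \<noteq> c' \<longrightarrow>
       (\<exists>I \<subseteq> {..<\<tau>}. \<tau> - s + 1 \<le> card I \<and>
          (\<forall>l. (\<forall>k<N. (\<Sum>i\<in>I. l i * (A c i k - A c' i k)) = 0) \<longrightarrow> (\<forall>i\<in>I. l i = 0))) \<and>
       (\<exists>K \<subseteq> {..<N}. \<tau> - s + 1 \<le> card K \<and>
          (\<forall>l. (\<forall>i<\<tau>. (\<Sum>k\<in>K. l k * (A c i k - A c' i k)) = 0) \<longrightarrow> (\<forall>k\<in>K. l k = 0))))"
proof -
  have N1: "N \<ge> 1" using s1 st tN by simp
  obtain \<beta> :: "nat \<Rightarrow> 'a alg_closure" where B1: "\<forall>i<N. \<beta> i \<in> FL N"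
    and B2: "\<forall>u::nat \<Rightarrow> 'a. (\<Sum>i<N. to_ac (u i) * \<beta> i) = 0 \<longrightarrow> (\<forall>i<N. u i = 0)"
    and B3: "\<forall>y\<in>FL N. \<exists>u::nat \<Rightarrow> 'a. y = (\<Sum>i<N. to_ac (u i) * \<beta> i)"
    using FL_basis[OF N1] by blast
  define co where "co y = (SOME u::nat \<Rightarrow> 'a. y = (\<Sum>k<N. to_ac (u k) * \<beta> k))" for y
  have coP: "y = (\<Sum>k<N. to_ac (co y k) * \<beta> k)" if "y \<in> FL N" for y
  proof -
    have "\<exists>u::nat \<Rightarrow> 'a. y = (\<Sum>k<N. to_ac (u k) * \<beta> k)" using B3 that by blast
    then show ?thesis unfolding co_def by (rule someI_ex)
  qed
  define M where "M = Lam (FL N :: 'a alg_closure set) s"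
  have finFL: "finite (FL N :: 'a alg_closure set)" and cFL: "card (FL N :: 'a alg_closure set) = CARD('a) ^ N"
    using card_FL[OF N1] by auto
  have fM: "finite M" and cM: "card M = CARD('a) ^ (N * s)"
    using card_Lam[OF finFL, of s] cFL by (auto simp: M_def power_mult)
  define A where "A c i k = co (linp s c (\<beta> i)) k" for c i k
  have main: "(\<exists>I \<subseteq> {..<\<tau>}. \<tau> - s + 1 \<le> card I \<and>
          (\<forall>l. (\<forall>k<N. (\<Sum>i\<in>I. l i * (A c i k - A c' i k)) = 0) \<longrightarrow> (\<forall>i\<in>I. l i = 0))) \<and>
       (\<exists>K \<subseteq> {..<N}. \<tau> - s + 1 \<le> card K \<and>
          (\<forall>l. (\<forall>i<\<tau>. (\<Sum>k\<in>K. l k * (A c i k - A c' i k)) = 0) \<longrightarrow> (\<forall>k\<in>K. l k = 0)))"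
    if c: "c \<in> M" and c': "c' \<in> M" and ne: "c \<noteq> c'" for c c'
  proof -
    define d where "d j = c j - c' j" for j
    obtain j0 where j0: "c j0 \<noteq> c' j0" using ne by (meson ext)
    have "j0 < s"
    proof (rule ccontr)
      assume "\<not> j0 < s"
      then show False using c c' j0 by (simp add: M_def Lam_def)
    qed
    have dj0: "d j0 \<noteq> 0" using j0 by (simp add: d_def)
    define D where "D i k = A c i k - A c' i k" for i k
    have W: "linp s d (\<beta> i) = (\<Sum>k<N. to_ac (D i k) * \<beta> k)" if i: "i < \<tau>" for i
    proof -
      have bi: "\<beta> i \<in> FL N" using B1 i tN by simp
      have l1: "linp s c (\<beta> i) \<in> FL N" by (rule linp_FL) (use c bi in \<open>auto simp: M_def Lam_def\<close>)
      have l2: "linp s c' (\<beta> i) \<in> FL N" by (rule linp_FL) (use c' bi in \<open>auto simp: M_def Lam_def\<close>)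
      have "linp s d (\<beta> i) = linp s c (\<beta> i) - linp s c' (\<beta> i)"
        unfolding d_def by (simp add: linp_diff_coef)
      also have "\<dots> = (\<Sum>k<N. to_ac (A c i k) * \<beta> k) - (\<Sum>k<N. to_ac (A c' i k) * \<beta> k)"
        unfolding A_def using coP[OF l1] coP[OF l2] by simp
      also have "\<dots> = (\<Sum>k<N. to_ac (D i k) * \<beta> k)"
        by (simp add: D_def sum_subtractf[symmetric] left_diff_distrib)
      finally show ?thesis .
    qed
    obtain I where I: "I \<subseteq> {..<\<tau>}" "\<tau> - s + 1 \<le> card I" "indepE (\<lambda>i. linp s d (\<beta> i)) I"
      using row_part[of \<beta> N \<tau> s j0 d, OF B2 tN s1 st \<open>j0 < s\<close> dj0] by blast
    have rowind: "\<forall>l. (\<forall>k<N. (\<Sum>i\<in>I. l i * D i k) = 0) \<longrightarrow> (\<forall>i\<in>I. l i = 0)"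
    proof (intro allI impI)
      fix l :: "nat \<Rightarrow> 'a" assume h: "\<forall>k<N. (\<Sum>i\<in>I. l i * D i k) = 0"
      have "(\<Sum>i\<in>I. to_ac (l i) * linp s d (\<beta> i)) = (\<Sum>i\<in>I. to_ac (l i) * (\<Sum>k<N. to_ac (D i k) * \<beta> k))"
        using W I(1) by (intro sum.cong) auto
      also have "\<dots> = (\<Sum>k<N. to_ac (\<Sum>i\<in>I. l i * D i k) * \<beta> k)" by (rule swap_ac)
      also have "\<dots> = 0" using h by simp
      finally show "\<forall>i\<in>I. l i = 0" using I(3) unfolding indepE_def by blast
    qed
    have IN: "I \<subseteq> {..<N}" using I(1) tN by auto
    obtain K where K: "K \<subseteq> {..<N}" "card I \<le> card K"
        "\<forall>l. (\<forall>i\<in>I. (\<Sum>k\<in>K. l k * D i k) = 0) \<longrightarrow> (\<forall>k\<in>K. l k = 0)"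
      using col_part[OF B2 IN rowind] by blast
    have "\<forall>l. (\<forall>i<\<tau>. (\<Sum>k\<in>K. l k * D i k) = 0) \<longrightarrow> (\<forall>k\<in>K. l k = 0)"
      using K(3) I(1) by blast
    note colind = this
    have cK: "\<tau> - s + 1 \<le> card K" using I(2) K(2) by linarith
    have ex1: "\<exists>I \<subseteq> {..<\<tau>}. \<tau> - s + 1 \<le> card I \<and>
          (\<forall>l. (\<forall>k<N. (\<Sum>i\<in>I. l i * D i k) = 0) \<longrightarrow> (\<forall>i\<in>I. l i = 0))"
      using I(1,2) rowind by blast
    have ex2: "\<exists>K \<subseteq> {..<N}. \<tau> - s + 1 \<le> card K \<and>
          (\<forall>l. (\<forall>i<\<tau>. (\<Sum>k\<in>K. l k * D i k) = 0) \<longrightarrow> (\<forall>k\<in>K. l k = 0))"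
      using K(1) cK colind by blast
    show ?thesis using ex1 ex2 unfolding D_def by blast
  qed
  show ?thesis
    apply (rule exI[where x=M])
    apply (rule exI[where x=A])
    using fM cM main by blast
qed


lemma rank_ge_family:
  fixes D :: "'a::field^'n::finite^'m::finite" and P :: "'m set"
  assumes fam: "\<And>f. (\<Sum>\<rho>\<in>P. f \<rho> *s row \<rho> D) = 0 \<Longrightarrow> \<forall>\<rho>\<in>P. f \<rho> = 0"
  shows "card P \<le> rank D"
proof -
  define r where "r \<rho> = row \<rho> D" for \<rho>
  have fP: "finite P" by simp
  have inj: "inj_on r P"
  proof (rule inj_onI, rule ccontr)
    fix \<rho>1 \<rho>2 assume p1: "\<rho>1 \<in> P" and p2: "\<rho>2 \<in> P" and eq: "r \<rho>1 = r \<rho>2" and ne: "\<rho>1 \<noteq> \<rho>2"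
    define g where "g \<rho> = (if \<rho> = \<rho>1 then 1 else if \<rho> = \<rho>2 then -1 else (0::'a))" for \<rho>
    have "(\<Sum>\<rho>\<in>P. g \<rho> *s r \<rho>) = (\<Sum>\<rho>\<in>P. (if \<rho> = \<rho>1 then r \<rho> else 0) - (if \<rho> = \<rho>2 then r \<rho> else 0))"
      by (rule sum.cong) (use ne in \<open>auto simp: g_def\<close>)
    also have "\<dots> = r \<rho>1 - r \<rho>2" using p1 p2 fP by (simp add: sum_subtractf)
    also have "\<dots> = 0" using eq by simp
    finally have "\<forall>\<rho>\<in>P. g \<rho> = 0" using fam unfolding r_def by blast
    then have "g \<rho>1 = 0" using p1 by blast
    then show False by (simp add: g_def)
  qed
  have ind: "vec.independent (r ` P)"
  proof (rule vec.independent_if_scalars_zero)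
    show "finite (r ` P)" by simp
    fix f x assume s: "(\<Sum>x\<in>r ` P. f x *s x) = 0" and x: "x \<in> r ` P"
    have "(\<Sum>x\<in>r ` P. f x *s x) = (\<Sum>\<rho>\<in>P. f (r \<rho>) *s r \<rho>)" by (simp add: sum.reindex[OF inj] o_def)
    then have "\<forall>\<rho>\<in>P. f (r \<rho>) = 0" using s fam[of "\<lambda>\<rho>. f (r \<rho>)"] unfolding r_def by simp
    then show "f x = 0" using x by blast
  qed
  have sub: "r ` P \<subseteq> rows D" by (auto simp: r_def rows_def)
  have "card (r ` P) \<le> vec.dim (rows D)" by (rule vec.independent_card_le_dim[OF sub ind])
  then show ?thesis using card_image[OF inj] by (simp add: row_rank_def_gen)
qed

lemma rank_le_span:
  fixes Y :: "'a::field^'n::finite^'m::finite"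
  assumes "rows Y \<subseteq> vec.span RR" "finite RR" "card RR \<le> k"
  shows "rank Y \<le> k"
  using vec.dim_le_card[OF assms(1,2)] assms(3) by (simp add: row_rank_def_gen)

lemma rank_zero_mat: "rank (0::'a::field^'n::finite^'m::finite) = 0"
proof -
  have "rows (0::'a^'n^'m) = {0}" by (auto simp: rows_def row_def vec_eq_iff)
  then show ?thesis by (simp add: row_rank_def_gen)
qed


theorem theorem4:
  fixes q d \<tau> n m :: nat
    and field_witness :: "'a::{finite,field} itself"
    and dims_witness :: "('n::finite \<times> 'm::finite) itself"
  assumes "CARD('a) = q"
    and "CARD('n) = n" and "CARD('m) = m"
    and "(d - 1) div 2 + 1 \<le> \<tau>" and "\<tau> < d" and "d \<le> n" and "n \<le> m"
    and "\<tau> \<le> n - \<tau>"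
  shows "\<exists>(C :: ('a^'n^'m) set) (r :: 'a^'n^'m).
           min_rank_dist_ge C d \<and>
           Max ((\<lambda>y. card (C \<inter> rank_ball \<tau> y)) ` UNIV) \<ge> card (C \<inter> rank_ball \<tau> r) \<and>
           card (C \<inter> rank_ball \<tau> r) \<ge> q ^ ((n - \<tau>) * (\<tau> - (d - 1) div 2))"
proof -
  note qa = assms(1) and na = assms(2) and ma = assms(3)
  define t where "t = (d - 1) div 2"
  define s where "s = \<tau> - t"
  define N where "N = n - \<tau>"
  have s1: "1 \<le> s" using assms(4) unfolding s_def t_def by linarith
  have st: "s \<le> \<tau>" unfolding s_def by simp
  have tN: "\<tau> \<le> N" using assms(8) unfolding N_def by simp
  have d2: "d \<le> 2 * (t + 1)" unfolding t_def by presburger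
  have tt: "\<tau> - s + 1 = t + 1" using assms(4) unfolding s_def t_def by linarith
  have nm: "n \<le> m" by (rule assms(7))
  have tn: "\<tau> + N = n" using assms(8) unfolding N_def by linarith
  obtain Ms :: "(nat \<Rightarrow> 'a alg_closure) set" and A :: "(nat \<Rightarrow> 'a alg_closure) \<Rightarrow> nat \<Rightarrow> nat \<Rightarrow> 'a"
    where H: "finite Ms \<and> card Ms = CARD('a) ^ (N * s) \<and>
     (\<forall>c\<in>Ms. \<forall>c'\<in>Ms. c \<noteq> c' \<longrightarrow>
       (\<exists>I \<subseteq> {..<\<tau>}. \<tau> - s + 1 \<le> card I \<and>
          (\<forall>l. (\<forall>k<N. (\<Sum>i\<in>I. l i * (A c i k - A c' i k)) = 0) \<longrightarrow> (\<forall>i\<in>I. l i = 0))) \<and>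
       (\<exists>K \<subseteq> {..<N}. \<tau> - s + 1 \<le> card K \<and>
          (\<forall>l. (\<forall>i<\<tau>. (\<Sum>k\<in>K. l k * (A c i k - A c' i k)) = 0) \<longrightarrow> (\<forall>k\<in>K. l k = 0))))"
    using mrd_exists[OF s1 st tN] by (elim exE)
  have fM: "finite Ms" and cM: "card Ms = CARD('a) ^ (N * s)" using H by auto
  have main: "(\<exists>I \<subseteq> {..<\<tau>}. \<tau> - s + 1 \<le> card I \<and>
          (\<forall>l. (\<forall>k<N. (\<Sum>i\<in>I. l i * (A c i k - A c' i k)) = 0) \<longrightarrow> (\<forall>i\<in>I. l i = 0))) \<and>
       (\<exists>K \<subseteq> {..<N}. \<tau> - s + 1 \<le> card K \<and>
          (\<forall>l. (\<forall>i<\<tau>. (\<Sum>k\<in>K. l k * (A c i k - A c' i k)) = 0) \<longrightarrow> (\<forall>k\<in>K. l k = 0)))"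
    if "c \<in> Ms" "c' \<in> Ms" "c \<noteq> c'" for c c'
    using H that by blast
  obtain em :: "'m \<Rightarrow> nat" where em: "bij_betw em UNIV {0..<m}"
    using ex_bij_betw_finite_nat[of "UNIV :: 'm set"] ma by auto
  obtain en :: "'n \<Rightarrow> nat" where en: "bij_betw en UNIV {0..<n}"
    using ex_bij_betw_finite_nat[of "UNIV :: 'n set"] na by auto
  define emi where "emi = inv_into UNIV em"
  define eni where "eni = inv_into UNIV en"
  have emr: "em \<rho> < m" for \<rho> using em by (auto simp: bij_betw_def)
  have enr: "en \<kappa> < n" for \<kappa> using en by (auto simp: bij_betw_def)
  have emi1: "em (emi i) = i" if "i < m" for i
    unfolding emi_def using bij_betw_inv_into_right[OF em] that by simp
  have eni1: "en (eni i) = i" if "i < n" for i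
    unfolding eni_def using bij_betw_inv_into_right[OF en] that by simp
  have emi2: "emi (em \<rho>) = \<rho>" for \<rho>
    unfolding emi_def using em by (simp add: bij_betw_def inv_into_f_f)
  define Ent where "Ent c u v = (if u < \<tau> then (if v < \<tau> then (if u = v then 1 else 0) else A c u (v - \<tau>))
      else if u < n then (if v < \<tau> then A c v (u - \<tau>) else (\<Sum>i<\<tau>. A c i (u - \<tau>) * A c i (v - \<tau>)))
      else 0)" for c u v
  define Xc :: "(nat \<Rightarrow> 'a alg_closure) \<Rightarrow> 'a^'n^'m" where "Xc c = (\<chi> \<rho> \<kappa>. Ent c (em \<rho>) (en \<kappa>))" for c
  have row_Xc: "row \<rho> (Xc c) $ \<kappa> = Ent c (em \<rho>) (en \<kappa>)" for \<rho> \<kappa> c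
    by (simp add: row_def Xc_def)
  have F1: "rank (Xc c) \<le> \<tau>" for c
  proof (rule rank_le_span)
    define RR where "RR = (\<lambda>i. row (emi i) (Xc c)) ` {..<\<tau>}"
    show "finite RR" unfolding RR_def by simp
    show "card RR \<le> \<tau>" unfolding RR_def using card_image_le[of "{..<\<tau>}"] by fastforce
    show "rows (Xc c) \<subseteq> vec.span RR"
    proof
      fix x assume "x \<in> rows (Xc c)"
      then obtain \<rho> where x: "x = row \<rho> (Xc c)" by (auto simp: rows_def)
      consider "em \<rho> < \<tau>" | "\<tau> \<le> em \<rho>" "em \<rho> < n" | "n \<le> em \<rho>" by linarith
      then show "x \<in> vec.span RR"
      proof cases
        case 1
        then have "x \<in> RR" unfolding RR_def x using emi2[of \<rho>] by (metis image_eqI lessThan_iff)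
        then show ?thesis by (rule vec.span_base)
      next
        case 2
        define k where "k = em \<rho> - \<tau>"
        have "x = (\<Sum>i<\<tau>. A c i k *s row (emi i) (Xc c))"
        proof (subst vec_eq_iff, intro allI)
          fix \<kappa>
          have "(\<Sum>i<\<tau>. A c i k *s row (emi i) (Xc c)) $ \<kappa> = (\<Sum>i<\<tau>. A c i k * Ent c i (en \<kappa>))"
            using emi1 nm assms(8) by (auto simp: sum_component row_Xc intro!: sum.cong)
          also have "\<dots> = x $ \<kappa>"
          proof (cases "en \<kappa> < \<tau>")
            case True
            have "(\<Sum>i<\<tau>. A c i k * Ent c i (en \<kappa>)) = (\<Sum>i<\<tau>. if i = en \<kappa> then A c i k else 0)"
              using True by (intro sum.cong) (auto simp: Ent_def)
            also have "\<dots> = A c (en \<kappa>) k" using True by simp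
            finally show ?thesis using True 2 by (simp add: x row_Xc Ent_def k_def)
          next
            case False
            then show ?thesis using 2 by (simp add: x row_Xc Ent_def k_def)
          qed
          finally show "x $ \<kappa> = (\<Sum>i<\<tau>. A c i k *s row (emi i) (Xc c)) $ \<kappa>" by simp
        qed
        also have "\<dots> \<in> vec.span RR"
          by (intro vec.span_sum vec.span_scale vec.span_base) (auto simp: RR_def)
        finally show ?thesis .
      next
        case 3
        have "x = 0" using 3 assms(8) by (simp add: vec_eq_iff x row_Xc Ent_def)
        then show ?thesis by (simp add: vec.span_zero)
      qed
    qed
  qed
  have F2: "2 * (t + 1) \<le> rank (Xc c - Xc c')" if c: "c \<in> Ms" "c' \<in> Ms" "c \<noteq> c'" for c c'
  proof -
    obtain I K where I: "I \<subseteq> {..<\<tau>}" "t + 1 \<le> card I"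
        "\<forall>l. (\<forall>k<N. (\<Sum>i\<in>I. l i * (A c i k - A c' i k)) = 0) \<longrightarrow> (\<forall>i\<in>I. l i = 0)"
      and K: "K \<subseteq> {..<N}" "t + 1 \<le> card K"
        "\<forall>l. (\<forall>i<\<tau>. (\<Sum>k\<in>K. l k * (A c i k - A c' i k)) = 0) \<longrightarrow> (\<forall>k\<in>K. l k = 0)"
      using main[OF c] tt by auto
    define Dm where "Dm = Xc c - Xc c'"
    define G where "G u v = Ent c u v - Ent c' u v" for u v
    have row_Dm: "row \<rho> Dm $ \<kappa> = G (em \<rho>) (en \<kappa>)" for \<rho> \<kappa>
      by (simp add: Dm_def G_def row_def Xc_def)
    define F where "F = I \<union> (\<lambda>k. \<tau> + k) ` K"
    have FI: "F \<subseteq> {..<n}" using I(1) K(1) tn unfolding F_def by auto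
    have injF: "inj_on emi F"
      by (rule inj_on_inverseI[where g=em]) (use FI nm emi1 in auto)
    have fI: "finite I" "finite K" using I(1) K(1) finite_subset by auto
    have disj: "I \<inter> (\<lambda>k. \<tau> + k) ` K = {}" using I(1) by auto
    have injK: "inj_on (\<lambda>k. \<tau> + k) K" by (auto simp: inj_on_def)
    define P where "P = emi ` F"
    have cP: "card P = card I + card K"
      unfolding P_def F_def using card_image[OF injF[unfolded F_def]] card_Un_disjoint[OF fI(1) _ disj]
        card_image[OF injK] fI by simp
    have fam: "\<forall>\<rho>\<in>P. f \<rho> = 0" if z: "(\<Sum>\<rho>\<in>P. f \<rho> *s row \<rho> Dm) = 0" for f
    proof -
      define h where "h u = f (emi u)" for u
      have comp: "(\<Sum>i\<in>I. h i * G i v) + (\<Sum>k\<in>K. h (\<tau> + k) * G (\<tau> + k) v) = 0" if v: "v < n" for v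
      proof -
        have "0 = (\<Sum>\<rho>\<in>P. f \<rho> *s row \<rho> Dm) $ eni v" using z by simp
        also have "\<dots> = (\<Sum>\<rho>\<in>P. f \<rho> * G (em \<rho>) v)"
          by (simp add: sum_component row_Dm eni1[OF v])
        also have "\<dots> = (\<Sum>u\<in>F. f (emi u) * G (em (emi u)) v)"
          unfolding P_def by (simp add: sum.reindex[OF injF])
        also have "\<dots> = (\<Sum>u\<in>F. h u * G u v)"
          using FI nm by (intro sum.cong) (auto simp: h_def emi1)
        also have "\<dots> = (\<Sum>i\<in>I. h i * G i v) + (\<Sum>u\<in>(\<lambda>k. \<tau> + k) ` K. h u * G u v)"
          unfolding F_def by (rule sum.union_disjoint) (use fI disj in auto)
        also have "(\<Sum>u\<in>(\<lambda>k. \<tau> + k) ` K. h u * G u v) = (\<Sum>k\<in>K. h (\<tau> + k) * G (\<tau> + k) v)"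
          by (simp add: sum.reindex[OF injK])
        finally show ?thesis by simp
      qed
      have bK: "\<forall>k\<in>K. h (\<tau> + k) = 0"
      proof -
        have "(\<Sum>k\<in>K. h (\<tau> + k) * (A c v k - A c' v k)) = 0" if v: "v < \<tau>" for v
        proof -
          have "(\<Sum>i\<in>I. h i * G i v) = 0"
            using I(1) v by (intro sum.neutral) (auto simp: G_def Ent_def)
          moreover have "(\<Sum>k\<in>K. h (\<tau> + k) * G (\<tau> + k) v) = (\<Sum>k\<in>K. h (\<tau> + k) * (A c v k - A c' v k))"
            using K(1) v tn by (intro sum.cong) (auto simp: G_def Ent_def)
          ultimately show ?thesis using comp[of v] v tn by simp
        qed
        then have "\<forall>v<\<tau>. (\<Sum>k\<in>K. (\<lambda>k. h (\<tau> + k)) k * (A c v k - A c' v k)) = 0" by simp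
        then show ?thesis using K(3) by (elim allE[of _ "\<lambda>k. h (\<tau> + k)"]) simp
      qed
      have aI: "\<forall>i\<in>I. h i = 0"
      proof -
        have "(\<Sum>i\<in>I. h i * (A c i k - A c' i k)) = 0" if k: "k < N" for k
        proof -
          have "(\<Sum>k'\<in>K. h (\<tau> + k') * G (\<tau> + k') (\<tau> + k)) = 0" using bK by simp
          moreover have "(\<Sum>i\<in>I. h i * G i (\<tau> + k)) = (\<Sum>i\<in>I. h i * (A c i k - A c' i k))"
            using I(1) by (intro sum.cong) (auto simp: G_def Ent_def)
          ultimately show ?thesis using comp[of "\<tau> + k"] k tn by simp
        qed
        then have "\<forall>k<N. (\<Sum>i\<in>I. h i * (A c i k - A c' i k)) = 0" by simp
        then show ?thesis using I(3) by (elim allE[of _ h]) simp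
      qed
      show ?thesis
      proof
        fix \<rho> assume "\<rho> \<in> P"
        then obtain u where u: "u \<in> F" "\<rho> = emi u" unfolding P_def by blast
        then consider "u \<in> I" | k where "k \<in> K" "u = \<tau> + k" unfolding F_def by blast
        then show "f \<rho> = 0"
        proof cases
          case 1 then show ?thesis using aI u(2) by (simp add: h_def)
        next
          case 2 then show ?thesis using bK u(2) by (simp add: h_def)
        qed
      qed
    qed
    have r1: "card P \<le> rank Dm" by (rule rank_ge_family) (use fam in blast)
    have r2: "2 * (t + 1) \<le> card P" using cP I(2) K(2) by simp
    show ?thesis using le_trans[OF r2 r1] unfolding Dm_def .
  qed
  define C where "C = Xc ` Ms"
  have injX: "inj_on Xc Ms"
  proof (rule inj_onI, rule ccontr)
    fix c c' assume "c \<in> Ms" "c' \<in> Ms" "Xc c = Xc c'" "c \<noteq> c'"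
    then have "2 * (t + 1) \<le> rank (Xc c - Xc c')" using F2 by blast
    then show False using \<open>Xc c = Xc c'\<close> rank_zero_mat[where 'a='a and 'n='n and 'm='m] by simp
  qed
  have cC: "card C = q ^ ((n - \<tau>) * (\<tau> - (d - 1) div 2))"
    unfolding C_def using card_image[OF injX] cM qa by (simp add: N_def s_def t_def)
  have ball: "C \<inter> rank_ball \<tau> 0 = C"
    unfolding C_def rank_ball_def using F1 by auto
  have mind: "min_rank_dist_ge C d"
    unfolding min_rank_dist_ge_def C_def using F2 d2 by (auto intro: le_trans)
  have mx: "Max ((\<lambda>y. card (C \<inter> rank_ball \<tau> y)) ` UNIV) \<ge> card (C \<inter> rank_ball \<tau> 0)"
    by (rule Max_ge) auto
  show ?thesis
    by (rule exI[where x=C], rule exI[where x=0]) (use mind mx ball cC in simp)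
qed


end
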